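(* For $i\in[s]$ let $p_i$ be a prime, $m_i\ge1$, $q_i=p_i^{m_i}$, $\omega_i$ a primitive $q_i$-th root of unity in $\mathbb C$, $k_i,r_i\ge0$, and $\alpha^{(i)}_t,\alpha^{(i)}_{t,j}\in\{0,\dots,q_i-1\}$ ($t\in[k_i]$, $j\in[r_i]$). Let $\mathcal P'$ be the CSP instance with pairwise distinct variables $x_{i,t}$ ($i\in[s],t\in[k_i]$) and $y_{i,j}$ ($i\in[s],j\in[r_i]$), where $x_{i,t},y_{i,j}$ take values in the set $U_{q_i}$ of $q_i$-th roots of unity, with constraints $x_{i,t}=\omega_i^{\alpha^{(i)}_t}\prod_{j=1}^{r_i}y_{i,j}^{\alpha^{(i)}_{t,j}}$. Let $$G'_i=\{x_{i,t}-\omega_i^{\alpha^{(i)}_t}\textstyle\prod_{j}y_{i,j}^{\alpha^{(i)}_{t,j}}:t\in[k_i]\}\cup\{y_{i,j}^{q_i}-1:j\in[r_i]\}.$$ Then $G'=\bigcup_{i=1}^sG'_i$ is a Gröbner basis for $\mathtt I(\mathcal P')=\mathbf I(\mathsf{Sol}(\mathcal P'))$ with respect to the lexicographic order $x_{1,1}\succ\dots\succ x_{1,k_1}\succ\dots\succ x_{s,1}\succ\dots\succ x_{s,k_s}\succ y_{1,1}\succ\dots\succ y_{1,r_1}\succ\dots\succ y_{s,1}\succ\dots\succ y_{s,r_s}$.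
   Context: $\mathsf{Sol}(\mathcal P')$ is the set of points (in $\mathbb C$ with each coordinate in its domain $U_{q_i}$) satisfying all constraints. $\mathtt I(\mathcal P')$ is the ideal generated by domain polynomials $z^{q_i}-1$ for each variable $z$ of sort $i$ and the constraint polynomials; $\mathbf I(S)$ is the ideal of polynomials vanishing on $S$. A Gröbner basis of $I$ is a finite $G\subseteq I$ with $\langle\mathrm{LT}(g):g\in G\rangle=\langle\mathrm{LT}(I)\rangle$. *)

theory Defs
  imports Complex_Main "HOL-Computational_Algebra.Primes" "HOL-Library.Poly_Mapping" "HOL-Library.Product_Lexorder"
begin

(* Variables: X i t stands for x_{i,t}, Y i j stands for y_{i,j} *)
datatype var = X nat nat | Y nat nat

type_synonym mono = "var \<Rightarrow>\<^sub>0 nat"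
type_synonym mpoly = "mono \<Rightarrow>\<^sub>0 complex"

definition Var :: "var \<Rightarrow> mpoly" where
  "Var v = Poly_Mapping.single (Poly_Mapping.single v 1) 1"

definition Const :: "complex \<Rightarrow> mpoly" where
  "Const c = Poly_Mapping.single 0 c"

definition mono_eval :: "(var \<Rightarrow> complex) \<Rightarrow> mono \<Rightarrow> complex" where
  "mono_eval a mm = (\<Prod>v\<in>Poly_Mapping.keys mm. a v ^ Poly_Mapping.lookup mm v)"

definition eval :: "(var \<Rightarrow> complex) \<Rightarrow> mpoly \<Rightarrow> complex" where
  "eval a f = (\<Sum>mm\<in>Poly_Mapping.keys f. Poly_Mapping.lookup f mm * mono_eval a mm)"

definition Vars :: "nat \<Rightarrow> (nat \<Rightarrow> nat) \<Rightarrow> (nat \<Rightarrow> nat) \<Rightarrow> var set" where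
  "Vars s k r = {X i t | i t. i \<in> {1..s} \<and> t \<in> {1..k i}} \<union> {Y i j | i j. i \<in> {1..s} \<and> j \<in> {1..r i}}"

fun sort_of :: "var \<Rightarrow> nat" where
  "sort_of (X i t) = i" | "sort_of (Y i j) = i"

definition polyring :: "var set \<Rightarrow> mpoly set" where
  "polyring V = {p. \<forall>m\<in>Poly_Mapping.keys p. Poly_Mapping.keys m \<subseteq> V}"

definition is_ideal :: "mpoly set \<Rightarrow> mpoly set \<Rightarrow> bool" where
  "is_ideal R I \<longleftrightarrow> I \<subseteq> R \<and> 0 \<in> I \<and> (\<forall>a\<in>I. \<forall>b\<in>I. a + b \<in> I)
      \<and> (\<forall>f\<in>R. \<forall>a\<in>I. f * a \<in> I)"

definition ideal_gen :: "mpoly set \<Rightarrow> mpoly set \<Rightarrow> mpoly set" where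
  "ideal_gen R S = \<Inter>{I. S \<subseteq> I \<and> is_ideal R I}"

definition vanishing_ideal :: "mpoly set \<Rightarrow> (var \<Rightarrow> complex) set \<Rightarrow> mpoly set" where
  "vanishing_ideal R S = {p \<in> R. \<forall>a\<in>S. eval a p = 0}"

(* variable order: v \<succ> w iff rank v < rank w; this gives
   x_{1,1} > ... > x_{1,k_1} > ... > x_{s,k_s} > y_{1,1} > ... > y_{s,r_s} *)
fun rank :: "var \<Rightarrow> nat \<times> nat \<times> nat" where
  "rank (X i t) = (0, i, t)" | "rank (Y i j) = (1, i, j)"

definition lex_less :: "mono \<Rightarrow> mono \<Rightarrow> bool" where
  "lex_less a b \<longleftrightarrow> (\<exists>v. Poly_Mapping.lookup a v < Poly_Mapping.lookup b v \<and>
       (\<forall>w. rank w < rank v \<longrightarrow> Poly_Mapping.lookup a w = Poly_Mapping.lookup b w))"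

definition lead_monom :: "mpoly \<Rightarrow> mono" where
  "lead_monom p = (THE m. m \<in> Poly_Mapping.keys p \<and> (\<forall>m'\<in>Poly_Mapping.keys p. m' \<noteq> m \<longrightarrow> lex_less m' m))"

definition LT :: "mpoly \<Rightarrow> mpoly" where
  "LT p = Poly_Mapping.single (lead_monom p) (Poly_Mapping.lookup p (lead_monom p))"

definition groebner_basis :: "mpoly set \<Rightarrow> mpoly set \<Rightarrow> mpoly set \<Rightarrow> bool" where
  "groebner_basis R G I \<longleftrightarrow> finite G \<and> G \<subseteq> I \<and> ideal_gen R (LT ` G) = ideal_gen R (LT ` I)"

definition primitive_root :: "nat \<Rightarrow> complex \<Rightarrow> bool" where
  "primitive_root n w \<longleftrightarrow> w ^ n = 1 \<and> (\<forall>d. 0 < d \<and> d < n \<longrightarrow> w ^ d \<noteq> 1)"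

definition constr_poly ::
  "(nat \<Rightarrow> nat) \<Rightarrow> (nat \<Rightarrow> complex) \<Rightarrow> (nat \<Rightarrow> nat \<Rightarrow> nat) \<Rightarrow> (nat \<Rightarrow> nat \<Rightarrow> nat \<Rightarrow> nat)
    \<Rightarrow> nat \<Rightarrow> nat \<Rightarrow> mpoly" where
  "constr_poly r \<omega> \<alpha> \<beta> i t = Var (X i t) -
     Const (\<omega> i ^ \<alpha> i t) * (\<Prod>j\<in>{1..r i}. Var (Y i j) ^ \<beta> i t j)"

(* solutions of P': points of C^Vars (extended by 0 outside Vars) *)
definition Sol ::
  "nat \<Rightarrow> (nat \<Rightarrow> nat) \<Rightarrow> (nat \<Rightarrow> nat) \<Rightarrow> (nat \<Rightarrow> nat) \<Rightarrow> (nat \<Rightarrow> complex)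
    \<Rightarrow> (nat \<Rightarrow> nat \<Rightarrow> nat) \<Rightarrow> (nat \<Rightarrow> nat \<Rightarrow> nat \<Rightarrow> nat) \<Rightarrow> (var \<Rightarrow> complex) set" where
  "Sol s k r q \<omega> \<alpha> \<beta> = {a. (\<forall>v. v \<notin> Vars s k r \<longrightarrow> a v = 0)
      \<and> (\<forall>v\<in>Vars s k r. a v ^ q (sort_of v) = 1)
      \<and> (\<forall>i\<in>{1..s}. \<forall>t\<in>{1..k i}.
           a (X i t) = \<omega> i ^ \<alpha> i t * (\<Prod>j\<in>{1..r i}. a (Y i j) ^ \<beta> i t j))}"

definition instance_ideal ::
  "nat \<Rightarrow> (nat \<Rightarrow> nat) \<Rightarrow> (nat \<Rightarrow> nat) \<Rightarrow> (nat \<Rightarrow> nat) \<Rightarrow> (nat \<Rightarrow> complex)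
    \<Rightarrow> (nat \<Rightarrow> nat \<Rightarrow> nat) \<Rightarrow> (nat \<Rightarrow> nat \<Rightarrow> nat \<Rightarrow> nat) \<Rightarrow> mpoly set" where
  "instance_ideal s k r q \<omega> \<alpha> \<beta> = ideal_gen (polyring (Vars s k r))
     ({Var v ^ q (sort_of v) - 1 | v. v \<in> Vars s k r}
      \<union> {constr_poly r \<omega> \<alpha> \<beta> i t | i t. i \<in> {1..s} \<and> t \<in> {1..k i}})"

definition Gi ::
  "(nat \<Rightarrow> nat) \<Rightarrow> (nat \<Rightarrow> nat) \<Rightarrow> (nat \<Rightarrow> nat) \<Rightarrow> (nat \<Rightarrow> complex)
    \<Rightarrow> (nat \<Rightarrow> nat \<Rightarrow> nat) \<Rightarrow> (nat \<Rightarrow> nat \<Rightarrow> nat \<Rightarrow> nat) \<Rightarrow> nat \<Rightarrow> mpoly set" where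
  "Gi k r q \<omega> \<alpha> \<beta> i = {constr_poly r \<omega> \<alpha> \<beta> i t | t. t \<in> {1..k i}}
      \<union> {Var (Y i j) ^ q i - 1 | j. j \<in> {1..r i}}"

end

theory Submission
  imports Defs "HOL-Library.FuncSet"
begin


section \<open>Evaluation\<close>

lemma mono_eval_superset:
  assumes "finite S" "Poly_Mapping.keys mm \<subseteq> S"
  shows "mono_eval a mm = (\<Prod>v\<in>S. a v ^ Poly_Mapping.lookup mm v)"
  unfolding mono_eval_def
  by (rule prod.mono_neutral_left) (use assms in \<open>auto simp: in_keys_iff\<close>)

lemma mono_eval_zero [simp]: "mono_eval a 0 = 1"
  by (simp add: mono_eval_def)

lemma mono_eval_add: "mono_eval a (m1 + m2) = mono_eval a m1 * mono_eval a m2"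
proof -
  let ?S = "Poly_Mapping.keys m1 \<union> Poly_Mapping.keys m2"
  have f: "finite ?S" by simp
  have "mono_eval a (m1 + m2) = (\<Prod>v\<in>?S. a v ^ Poly_Mapping.lookup (m1 + m2) v)"
    by (rule mono_eval_superset[OF f keys_add])
  also have "\<dots> = (\<Prod>v\<in>?S. a v ^ Poly_Mapping.lookup m1 v) * (\<Prod>v\<in>?S. a v ^ Poly_Mapping.lookup m2 v)"
    by (simp add: lookup_add power_add prod.distrib)
  also have "\<dots> = mono_eval a m1 * mono_eval a m2"
    using mono_eval_superset[OF f, of m1 a] mono_eval_superset[OF f, of m2 a] by auto
  finally show ?thesis .
qed

lemma mono_eval_single: "mono_eval a (Poly_Mapping.single v n) = a v ^ n"
  by (simp add: mono_eval_def)

lemma eval_superset: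
  assumes "finite S" "Poly_Mapping.keys f \<subseteq> S"
  shows "eval a f = (\<Sum>m\<in>S. Poly_Mapping.lookup f m * mono_eval a m)"
  unfolding eval_def
  by (rule sum.mono_neutral_left) (use assms in \<open>auto simp: in_keys_iff\<close>)

lemma eval_zero [simp]: "eval a 0 = 0"
  by (simp add: eval_def)

lemma eval_add: "eval a (f + g) = eval a f + eval a g"
proof -
  let ?S = "Poly_Mapping.keys f \<union> Poly_Mapping.keys g"
  have fi: "finite ?S" by simp
  have "eval a (f + g) = (\<Sum>m\<in>?S. Poly_Mapping.lookup (f + g) m * mono_eval a m)"
    by (rule eval_superset[OF fi keys_add])
  also have "\<dots> = (\<Sum>m\<in>?S. Poly_Mapping.lookup f m * mono_eval a m) + (\<Sum>m\<in>?S. Poly_Mapping.lookup g m * mono_eval a m)"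
    by (simp add: lookup_add distrib_right sum.distrib)
  also have "\<dots> = eval a f + eval a g"
    using eval_superset[OF fi, of f a] eval_superset[OF fi, of g a] by auto
  finally show ?thesis .
qed

lemma eval_uminus: "eval a (- f) = - eval a f"
  by (simp add: eval_def sum_negf)

lemma eval_diff: "eval a (f - g) = eval a f - eval a g"
  using eval_add[of a f "- g"] eval_uminus[of a g] by simp

lemma eval_single: "eval a (Poly_Mapping.single m c) = c * mono_eval a m"
  by (simp add: eval_def)

lemma eval_sum: "eval a (sum F A) = (\<Sum>i\<in>A. eval a (F i))"
  by (induction A rule: infinite_finite_induct) (auto simp: eval_add)

lemma poly_expand: "f = (\<Sum>m\<in>Poly_Mapping.keys f. Poly_Mapping.single m (Poly_Mapping.lookup f m))"
proof (rule poly_mapping_eqI)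
  fix k
  show "Poly_Mapping.lookup f k = Poly_Mapping.lookup (\<Sum>m\<in>Poly_Mapping.keys f. Poly_Mapping.single m (Poly_Mapping.lookup f m)) k"
    by (auto simp: lookup_sum lookup_single when_def in_keys_iff)
qed



lemma eval_mult: "eval a (f * g) = eval a f * eval a g"
proof -
  let ?F = "Poly_Mapping.keys f" and ?G = "Poly_Mapping.keys g"
  have "f * g = (\<Sum>m\<in>?F. Poly_Mapping.single m (Poly_Mapping.lookup f m)) * (\<Sum>m'\<in>?G. Poly_Mapping.single m' (Poly_Mapping.lookup g m'))"
    using poly_expand[of f] poly_expand[of g] by simp
  also have "\<dots> = (\<Sum>m\<in>?F. \<Sum>m'\<in>?G. Poly_Mapping.single (m + m') (Poly_Mapping.lookup f m * Poly_Mapping.lookup g m'))"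
    by (simp only: sum_product mult_single)
  finally have "eval a (f * g) = (\<Sum>m\<in>?F. \<Sum>m'\<in>?G. Poly_Mapping.lookup f m * Poly_Mapping.lookup g m' * (mono_eval a m * mono_eval a m'))"
    by (simp add: eval_sum eval_single mono_eval_add)
  also have "\<dots> = eval a f * eval a g"
    unfolding eval_def sum_product by (simp add: algebra_simps)
  finally show ?thesis .
qed




lemma eval_one [simp]: "eval a 1 = 1"
  using eval_single[of a 0 1] by simp

lemma eval_power: "eval a (f ^ n) = eval a f ^ n"
  by (induction n) (auto simp: eval_mult)

lemma eval_prod: "eval a (prod F A) = (\<Prod>i\<in>A. eval a (F i))"
proof (induction A rule: infinite_finite_induct)
  case (insert x A)
  have "eval a (prod F (insert x A)) = eval a (F x * prod F A)"
    by (rule arg_cong[where f="eval a"], rule prod.insert[OF insert(1,2)])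
  also have "\<dots> = eval a (F x) * eval a (prod F A)" by (rule eval_mult)
  also have "\<dots> = eval a (F x) * (\<Prod>i\<in>A. eval a (F i))" using insert.IH by simp
  also have "\<dots> = (\<Prod>i\<in>insert x A. eval a (F i))"
    by (rule prod.insert[OF insert(1,2), symmetric])
  finally show ?case .
qed simp_all

lemma eval_Var [simp]: "eval a (Var v) = a v"
  by (simp add: Var_def eval_single mono_eval_single)

lemma eval_Const [simp]: "eval a (Const c) = c"
  by (simp add: Const_def eval_single)

section \<open>Polynomial rings and ideals\<close>

lemma keys_add_nat: "Poly_Mapping.keys ((m1::'a \<Rightarrow>\<^sub>0 nat) + m2) = Poly_Mapping.keys m1 \<union> Poly_Mapping.keys m2"
  by (auto simp: in_keys_iff lookup_add)

lemma polyring_single: "Poly_Mapping.keys m \<subseteq> V \<Longrightarrow> Poly_Mapping.single m c \<in> polyring V"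
  by (simp add: polyring_def)

lemma polyring_zero [simp]: "0 \<in> polyring V"
  by (simp add: polyring_def)

lemma polyring_add: "f \<in> polyring V \<Longrightarrow> g \<in> polyring V \<Longrightarrow> f + g \<in> polyring V"
  unfolding polyring_def mem_Collect_eq
proof
  fix m assume f: "\<forall>m\<in>Poly_Mapping.keys f. Poly_Mapping.keys m \<subseteq> V"
    and g: "\<forall>m\<in>Poly_Mapping.keys g. Poly_Mapping.keys m \<subseteq> V"
    and m: "m \<in> Poly_Mapping.keys (f + g)"
  from m have "m \<in> Poly_Mapping.keys f \<or> m \<in> Poly_Mapping.keys g"
    using keys_add[of f g] by blast
  then show "Poly_Mapping.keys m \<subseteq> V" using f g by blast
qed

lemma polyring_uminus: "f \<in> polyring V \<Longrightarrow> - f \<in> polyring V"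
  unfolding polyring_def mem_Collect_eq
proof
  fix m assume f: "\<forall>m\<in>Poly_Mapping.keys f. Poly_Mapping.keys m \<subseteq> V"
    and m: "m \<in> Poly_Mapping.keys (- f)"
  then show "Poly_Mapping.keys m \<subseteq> V" by simp
qed

lemma polyring_diff: "f \<in> polyring V \<Longrightarrow> g \<in> polyring V \<Longrightarrow> f - g \<in> polyring V"
  using polyring_add[of f V "- g"] polyring_uminus[of g V] by simp

lemma polyring_mult:
  assumes "f \<in> polyring V" "g \<in> polyring V" shows "f * g \<in> polyring V"
  unfolding polyring_def
proof (intro CollectI ballI)
  fix m assume "m \<in> Poly_Mapping.keys (f * g)"
  then obtain a b where ab: "m = a + b" "a \<in> Poly_Mapping.keys f" "b \<in> Poly_Mapping.keys g"
    using keys_mult[of f g] by blast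
  then show "Poly_Mapping.keys m \<subseteq> V" using assms by (auto simp: keys_add_nat polyring_def)
qed

lemma polyring_one [simp]: "1 \<in> polyring V"
  by (simp add: polyring_def)

lemma polyring_Const [simp]: "Const c \<in> polyring V"
  by (simp add: Const_def polyring_single)

lemma polyring_Var: "v \<in> V \<Longrightarrow> Var v \<in> polyring V"
  by (simp add: Var_def polyring_single)

lemma polyring_power: "f \<in> polyring V \<Longrightarrow> f ^ n \<in> polyring V"
  by (induction n) (auto simp: polyring_mult)

lemma polyring_prod:
  assumes "\<And>i. i \<in> A \<Longrightarrow> F i \<in> polyring V" shows "prod F A \<in> polyring V"
  using assms
proof (induction A rule: infinite_finite_induct)
  case (insert x A)
  then show ?case by (simp add: polyring_mult)
qed auto

lemma polyring_ideal: "is_ideal (polyring V) (polyring V)"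
  by (simp add: is_ideal_def polyring_add polyring_mult)

lemma ideal_gen_sub: "S \<subseteq> ideal_gen R S"
  unfolding ideal_gen_def by blast

lemma ideal_gen_least: "is_ideal R I \<Longrightarrow> S \<subseteq> I \<Longrightarrow> ideal_gen R S \<subseteq> I"
  unfolding ideal_gen_def by blast

lemma ideal_gen_mono: "S \<subseteq> S' \<Longrightarrow> ideal_gen R S \<subseteq> ideal_gen R S'"
  unfolding ideal_gen_def by blast

lemma ideal_gen_ideal:
  assumes "S \<subseteq> polyring V"
  shows "is_ideal (polyring V) (ideal_gen (polyring V) S)"
proof -
  let ?F = "{I. S \<subseteq> I \<and> is_ideal (polyring V) I}"
  have R: "polyring V \<in> ?F" using assms polyring_ideal[of V] by blast
  have 1: "ideal_gen (polyring V) S \<subseteq> polyring V"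
    unfolding ideal_gen_def using R by blast
  have 2: "0 \<in> ideal_gen (polyring V) S"
    unfolding ideal_gen_def is_ideal_def by blast
  have 3: "a + b \<in> ideal_gen (polyring V) S" if "a \<in> ideal_gen (polyring V) S" "b \<in> ideal_gen (polyring V) S" for a b
    using that unfolding ideal_gen_def is_ideal_def by blast
  have 4: "f * a \<in> ideal_gen (polyring V) S" if "f \<in> polyring V" "a \<in> ideal_gen (polyring V) S" for f a
    using that unfolding ideal_gen_def is_ideal_def by blast
  show ?thesis unfolding is_ideal_def using 1 2 3 4 by blast
qed

lemma ideal_mult: "is_ideal R I \<Longrightarrow> f \<in> R \<Longrightarrow> a \<in> I \<Longrightarrow> f * a \<in> I"
  by (simp add: is_ideal_def)

lemma ideal_add: "is_ideal R I \<Longrightarrow> a \<in> I \<Longrightarrow> b \<in> I \<Longrightarrow> a + b \<in> I"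
  by (simp add: is_ideal_def)

lemma ideal_zero: "is_ideal R I \<Longrightarrow> 0 \<in> I"
  by (simp add: is_ideal_def)

lemma ideal_sum: "is_ideal R I \<Longrightarrow> (\<And>i. i \<in> A \<Longrightarrow> F i \<in> I) \<Longrightarrow> sum F A \<in> I"
  by (induction A rule: infinite_finite_induct) (auto simp: ideal_add ideal_zero)

lemma ideal_uminus: "is_ideal (polyring V) I \<Longrightarrow> a \<in> I \<Longrightarrow> - a \<in> I"
proof -
  assume a: "is_ideal (polyring V) I" "a \<in> I"
  have "-1 \<in> polyring V" using polyring_Const[of "-1" V] by (simp add: Const_def single_uminus)
  then have "(-1) * a \<in> I" using ideal_mult[OF a(1) _ a(2)] by blast
  then show ?thesis by simp
qed

lemma ideal_diff: "is_ideal (polyring V) I \<Longrightarrow> a \<in> I \<Longrightarrow> b \<in> I \<Longrightarrow> a - b \<in> I"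
  using ideal_add[of "polyring V" I a "- b"] ideal_uminus[of V I b] by simp

lemma vanishing_ideal_ideal: "is_ideal (polyring V) (vanishing_ideal (polyring V) S)"
  unfolding is_ideal_def vanishing_ideal_def
  by (intro conjI ballI) (simp_all add: polyring_add polyring_mult eval_add eval_mult subset_iff)




section \<open>Lex order\<close>

lemma rank_inj: "rank v = rank w \<Longrightarrow> v = w"
  by (cases v; cases w) auto

lemma lex_irrefl: "\<not> lex_less a a"
  by (simp add: lex_less_def)

lemma lex_trans:
  assumes "lex_less a b" "lex_less b c" shows "lex_less a c"
proof -
  obtain v1 where v1: "Poly_Mapping.lookup a v1 < Poly_Mapping.lookup b v1"
    "\<And>w. rank w < rank v1 \<Longrightarrow> Poly_Mapping.lookup a w = Poly_Mapping.lookup b w"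
    using assms(1) unfolding lex_less_def by blast
  obtain v2 where v2: "Poly_Mapping.lookup b v2 < Poly_Mapping.lookup c v2"
    "\<And>w. rank w < rank v2 \<Longrightarrow> Poly_Mapping.lookup b w = Poly_Mapping.lookup c w"
    using assms(2) unfolding lex_less_def by blast
  consider "rank v1 < rank v2" | "rank v2 < rank v1" | "rank v1 = rank v2" by fastforce
  then show ?thesis
  proof cases
    case 1
    then show ?thesis unfolding lex_less_def
      by (intro exI[of _ v1]) (use v1 v2 in \<open>auto intro: order.strict_trans\<close>)
  next
    case 2
    then show ?thesis unfolding lex_less_def
      by (intro exI[of _ v2]) (use v1 v2 in \<open>auto intro: order.strict_trans\<close>)
  next
    case 3
    then have "v1 = v2" by (rule rank_inj)
    then show ?thesis unfolding lex_less_def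
      by (intro exI[of _ v1]) (use v1 v2 in auto)
  qed
qed

lemma lex_asym: "lex_less a b \<Longrightarrow> \<not> lex_less b a"
  using lex_trans lex_irrefl by blast

lemma lex_total:
  assumes "a \<noteq> b" shows "lex_less a b \<or> lex_less b a"
proof -
  let ?D = "{v. Poly_Mapping.lookup a v \<noteq> Poly_Mapping.lookup b v}"
  have fin: "finite ?D"
    by (rule finite_subset[of _ "Poly_Mapping.keys a \<union> Poly_Mapping.keys b"]) (auto simp: in_keys_iff)
  have ne: "?D \<noteq> {}"
  proof
    assume "?D = {}"
    then have "\<And>k. Poly_Mapping.lookup a k = Poly_Mapping.lookup b k" by blast
    then have "a = b" by (rule poly_mapping_eqI)
    then show False using assms by simp
  qed
  define r0 where "r0 = Min (rank ` ?D)"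
  have "r0 \<in> rank ` ?D" unfolding r0_def using fin ne by (intro Min_in) auto
  then obtain v where v: "v \<in> ?D" "rank v = r0" by blast
  have below: "Poly_Mapping.lookup a w = Poly_Mapping.lookup b w" if "rank w < rank v" for w
  proof (rule ccontr)
    assume "Poly_Mapping.lookup a w \<noteq> Poly_Mapping.lookup b w"
    then have "r0 \<le> rank w" unfolding r0_def using fin by (intro Min_le) auto
    then show False using that v(2) by simp
  qed
  show ?thesis
  proof (cases "Poly_Mapping.lookup a v < Poly_Mapping.lookup b v")
    case True
    then have "lex_less a b" unfolding lex_less_def
      by (intro exI[of _ v] conjI allI impI) (simp_all add: below)
    then show ?thesis by (rule disjI1)
  next
    case False
    then have "Poly_Mapping.lookup b v < Poly_Mapping.lookup a v" using v(1) by simp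
    then have "lex_less b a" unfolding lex_less_def
      by (intro exI[of _ v] conjI allI impI) (simp_all add: below)
    then show ?thesis by (rule disjI2)
  qed
qed

lemma lead_monom_eq:
  assumes "M \<in> Poly_Mapping.keys f" "\<forall>m'\<in>Poly_Mapping.keys f. m' \<noteq> M \<longrightarrow> lex_less m' M"
  shows "lead_monom f = M"
  unfolding lead_monom_def
proof (rule the_equality)
  show "M \<in> Poly_Mapping.keys f \<and> (\<forall>m'\<in>Poly_Mapping.keys f. m' \<noteq> M \<longrightarrow> lex_less m' M)"
    using assms by blast
next
  fix M' assume M': "M' \<in> Poly_Mapping.keys f \<and> (\<forall>m'\<in>Poly_Mapping.keys f. m' \<noteq> M' \<longrightarrow> lex_less m' M')"
  show "M' = M"
  proof (rule ccontr)
    assume ne: "M' \<noteq> M"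
    then have "lex_less M' M" using assms M' by blast
    moreover have "M \<noteq> M'" using ne by simp
    then have "lex_less M M'" using assms M' by blast
    ultimately show False using lex_asym by blast
  qed
qed

lemma exists_lex_max:
  assumes "finite A" "A \<noteq> {}"
  shows "\<exists>M\<in>A. \<forall>m\<in>A. m \<noteq> M \<longrightarrow> lex_less m M"
  using assms
proof (induction A rule: finite_ne_induct)
  case (singleton x)
  then show ?case by blast
next
  case (insert x A)
  then obtain M where M: "M \<in> A" "\<forall>m\<in>A. m \<noteq> M \<longrightarrow> lex_less m M" by blast
  show ?case
  proof (cases "lex_less x M")
    case True
    then show ?thesis using M by blast
  next
    case False
    then have xM: "x \<noteq> M \<Longrightarrow> lex_less M x" using lex_total by blast
    have "x \<noteq> M" using M(1) insert(3) by blast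
    then have "lex_less M x" using xM by blast
    then have "\<forall>m\<in>insert x A. m \<noteq> x \<longrightarrow> lex_less m x"
    proof (intro ballI impI)
      fix m assume Mx: "lex_less M x" and m: "m \<in> insert x A" "m \<noteq> x"
      then have mA: "m \<in> A" by simp
      show "lex_less m x"
      proof (cases "m = M")
        case True
        then show ?thesis using Mx by simp
      next
        case False
        then have "lex_less m M" using M mA by blast
        then show ?thesis using lex_trans Mx by blast
      qed
    qed
    then show ?thesis by blast
  qed
qed

lemma lead_monom_prop:
  assumes "f \<noteq> 0"
  shows "lead_monom f \<in> Poly_Mapping.keys f"
    "\<forall>m'\<in>Poly_Mapping.keys f. m' \<noteq> lead_monom f \<longrightarrow> lex_less m' (lead_monom f)"
proof -
  have "Poly_Mapping.keys f \<noteq> {}" using assms by simp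
  then obtain M where M: "M \<in> Poly_Mapping.keys f" "\<forall>m\<in>Poly_Mapping.keys f. m \<noteq> M \<longrightarrow> lex_less m M"
    using exists_lex_max[of "Poly_Mapping.keys f"] by auto
  then have "lead_monom f = M" by (rule lead_monom_eq)
  then show "lead_monom f \<in> Poly_Mapping.keys f"
    "\<forall>m'\<in>Poly_Mapping.keys f. m' \<noteq> lead_monom f \<longrightarrow> lex_less m' (lead_monom f)"
    using M by auto
qed




section \<open>Monomial algebra\<close>

lemma Var_power: "Var v ^ n = Poly_Mapping.single (Poly_Mapping.single v n) 1"
proof (induction n)
  case 0
  then show ?case by simp
next
  case (Suc n)
  have "Var v ^ Suc n = Poly_Mapping.single (Poly_Mapping.single v 1) 1 * Poly_Mapping.single (Poly_Mapping.single v n) 1"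
    by (simp only: power_Suc Suc.IH) (simp only: Var_def)
  also have "\<dots> = Poly_Mapping.single (Poly_Mapping.single v 1 + Poly_Mapping.single v n) 1"
    by (simp add: mult_single)
  also have "Poly_Mapping.single v 1 + Poly_Mapping.single v n = Poly_Mapping.single v (Suc n)"
    by (simp add: single_add[symmetric])
  finally show ?case .
qed

lemma prod_single_mono:
  "(\<Prod>j\<in>A. Poly_Mapping.single (m j) (1::complex)) = Poly_Mapping.single (\<Sum>j\<in>A. m j) 1"
proof (induction A rule: infinite_finite_induct)
  case (insert x A)
  have "(\<Prod>j\<in>insert x A. Poly_Mapping.single (m j) (1::complex)) = Poly_Mapping.single (m x) 1 * (\<Prod>j\<in>A. Poly_Mapping.single (m j) (1::complex))"
    by (rule prod.insert[OF insert(1,2)])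
  also have "\<dots> = Poly_Mapping.single (m x + (\<Sum>j\<in>A. m j)) 1"
    by (simp add: insert.IH mult_single)
  also have "m x + (\<Sum>j\<in>A. m j) = (\<Sum>j\<in>insert x A. m j)"
    by (rule sum.insert[OF insert(1,2), symmetric])
  finally show ?case .
qed simp_all

lemma Const_mult_single: "Const c * Poly_Mapping.single m d = Poly_Mapping.single m (c * d)"
  by (simp add: Const_def mult_single)

definition wsum :: "(var \<Rightarrow> nat) \<Rightarrow> mono \<Rightarrow> nat" where
  "wsum w m = (\<Sum>v\<in>Poly_Mapping.keys m. w v * Poly_Mapping.lookup m v)"

lemma wsum_superset:
  assumes "finite A" "Poly_Mapping.keys m \<subseteq> A"
  shows "wsum w m = (\<Sum>v\<in>A. w v * Poly_Mapping.lookup m v)"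
  unfolding wsum_def
  by (rule sum.mono_neutral_left) (use assms in \<open>auto simp: in_keys_iff\<close>)

lemma wsum_add: "wsum w (a + b) = wsum w a + wsum w b"
proof -
  let ?A = "Poly_Mapping.keys a \<union> Poly_Mapping.keys b"
  have fi: "finite ?A" by simp
  have "wsum w (a + b) = (\<Sum>v\<in>?A. w v * Poly_Mapping.lookup (a + b) v)"
    by (rule wsum_superset[OF fi keys_add])
  also have "\<dots> = (\<Sum>v\<in>?A. w v * Poly_Mapping.lookup a v) + (\<Sum>v\<in>?A. w v * Poly_Mapping.lookup b v)"
    by (simp add: lookup_add distrib_left sum.distrib)
  also have "\<dots> = wsum w a + wsum w b"
    using wsum_superset[OF fi, of a w] wsum_superset[OF fi, of b w] by simp
  finally show ?thesis .
qed

lemma wsum_single: "wsum w (Poly_Mapping.single v n) = w v * n"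
  by (simp add: wsum_def)

lemma wsum_zero: "(\<And>v. v \<in> Poly_Mapping.keys m \<Longrightarrow> w v = 0) \<Longrightarrow> wsum w m = 0"
  unfolding wsum_def by (rule sum.neutral) simp

fun xw :: "var \<Rightarrow> nat" where
  "xw (X i t) = 1" | "xw (Y i j) = 0"

lemma lookup_minus_nat: "Poly_Mapping.lookup ((a::var \<Rightarrow>\<^sub>0 nat) - b) v = Poly_Mapping.lookup a v - Poly_Mapping.lookup b v"
  by (rule lookup_minus)

lemma split_mono:
  fixes mm :: mono
  assumes "n \<le> Poly_Mapping.lookup mm v"
  shows "mm = (mm - Poly_Mapping.single v n) + Poly_Mapping.single v n"
proof (rule poly_mapping_eqI)
  fix w
  show "Poly_Mapping.lookup mm w = Poly_Mapping.lookup (mm - Poly_Mapping.single v n + Poly_Mapping.single v n) w"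
    using assms by (cases "w = v") (simp_all add: lookup_add lookup_minus_nat lookup_single_not_eq)
qed




locale cspctx =
  fixes s :: nat and q k r :: "nat \<Rightarrow> nat" and \<omega> :: "nat \<Rightarrow> complex"
    and \<alpha> :: "nat \<Rightarrow> nat \<Rightarrow> nat" and \<beta> :: "nat \<Rightarrow> nat \<Rightarrow> nat \<Rightarrow> nat"
  assumes qpos: "\<And>i. i \<in> {1..s} \<Longrightarrow> q i > 0"
    and prim: "\<And>i. i \<in> {1..s} \<Longrightarrow> primitive_root (q i) (\<omega> i)"
begin

abbreviation "V \<equiv> Vars s k r"
abbreviation "R \<equiv> polyring V"
definition "G = (\<Union>i\<in>{1..s}. Gi k r q \<omega> \<alpha> \<beta> i)"
definition "J = ideal_gen R G"
definition "YV = {Y i j | i j. i \<in> {1..s} \<and> j \<in> {1..r i}}"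
definition "std u \<longleftrightarrow> Poly_Mapping.keys u \<subseteq> YV \<and>
   (\<forall>v\<in>Poly_Mapping.keys u. Poly_Mapping.lookup u v < q (sort_of v))"
definition "Pm i t = (\<Sum>j\<in>{1..r i}. Poly_Mapping.single (Y i j) (\<beta> i t j))"

lemma X_in_V: "X i t \<in> V \<longleftrightarrow> i \<in> {1..s} \<and> t \<in> {1..k i}"
  by (simp add: Vars_def)

lemma Y_in_V: "Y i j \<in> V \<longleftrightarrow> i \<in> {1..s} \<and> j \<in> {1..r i}"
  by (simp add: Vars_def)

lemma Y_in_YV: "Y i j \<in> YV \<longleftrightarrow> i \<in> {1..s} \<and> j \<in> {1..r i}"
  by (simp add: YV_def)

lemma X_notin_YV: "X i t \<notin> YV"
  by (simp add: YV_def)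

lemma YV_sub_V: "YV \<subseteq> V"
  unfolding YV_def Vars_def by blast

lemma finite_YV: "finite YV"
proof -
  have "YV \<subseteq> (\<lambda>(i, j). Y i j) ` (SIGMA i:{1..s}. {1..r i})"
    unfolding YV_def by auto
  then show ?thesis by (rule finite_subset) auto
qed

lemma lookup_Pm_X: "Poly_Mapping.lookup (Pm i t) (X a b) = 0"
  by (simp add: Pm_def lookup_sum lookup_single_not_eq)

lemma keys_Pm: "Poly_Mapping.keys (Pm i t) \<subseteq> {Y i j | j. j \<in> {1..r i}}"
proof -
  have "Poly_Mapping.keys (Pm i t) \<subseteq> (\<Union>j\<in>{1..r i}. Poly_Mapping.keys (Poly_Mapping.single (Y i j) (\<beta> i t j)))"
    unfolding Pm_def by (rule keys_sum)
  also have "\<dots> \<subseteq> {Y i j | j. j \<in> {1..r i}}" by auto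
  finally show ?thesis .
qed

lemma keys_Pm_V: "i \<in> {1..s} \<Longrightarrow> Poly_Mapping.keys (Pm i t) \<subseteq> V"
  using keys_Pm[of i t] by (auto simp: Y_in_V)

lemma constr_eq:
  "constr_poly r \<omega> \<alpha> \<beta> i t = Var (X i t) - Poly_Mapping.single (Pm i t) (\<omega> i ^ \<alpha> i t)"
proof -
  have "(\<Prod>j\<in>{1..r i}. Var (Y i j) ^ \<beta> i t j) = (\<Prod>j\<in>{1..r i}. Poly_Mapping.single (Poly_Mapping.single (Y i j) (\<beta> i t j)) (1::complex))"
    by (simp add: Var_power)
  also have "\<dots> = Poly_Mapping.single (Pm i t) 1"
    unfolding Pm_def by (rule prod_single_mono)
  finally show ?thesis
    unfolding constr_poly_def by (simp add: Const_mult_single)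
qed

lemma constr_in_R: "i \<in> {1..s} \<Longrightarrow> t \<in> {1..k i} \<Longrightarrow> constr_poly r \<omega> \<alpha> \<beta> i t \<in> R"
  unfolding constr_eq
  by (intro polyring_diff polyring_Var polyring_single keys_Pm_V) (simp_all add: X_in_V)

lemma dom_in_R: "v \<in> V \<Longrightarrow> Var v ^ n - 1 \<in> R"
  by (intro polyring_diff polyring_power polyring_Var polyring_one)

lemma G_sub_R: "G \<subseteq> R"
proof
  fix g assume "g \<in> G"
  then obtain i where i: "i \<in> {1..s}" "g \<in> Gi k r q \<omega> \<alpha> \<beta> i" unfolding G_def by blast
  then consider (c) t where "t \<in> {1..k i}" "g = constr_poly r \<omega> \<alpha> \<beta> i t"
    | (d) j where "j \<in> {1..r i}" "g = Var (Y i j) ^ q i - 1"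
    unfolding Gi_def by blast
  then show "g \<in> R"
  proof cases
    case c
    then show ?thesis using constr_in_R i(1) by simp
  next
    case d
    then show ?thesis using dom_in_R[of "Y i j"] i(1) by (simp add: Y_in_V)
  qed
qed

lemma J_ideal: "is_ideal R J"
  unfolding J_def by (rule ideal_gen_ideal[OF G_sub_R])

lemma constr_in_G: "i \<in> {1..s} \<Longrightarrow> t \<in> {1..k i} \<Longrightarrow> constr_poly r \<omega> \<alpha> \<beta> i t \<in> G"
  unfolding G_def Gi_def by blast

lemma dom_in_G: "i \<in> {1..s} \<Longrightarrow> j \<in> {1..r i} \<Longrightarrow> Var (Y i j) ^ q i - 1 \<in> G"
  unfolding G_def Gi_def by blast

lemma G_sub_J: "G \<subseteq> J"
  unfolding J_def by (rule ideal_gen_sub)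

lemma finite_G: "finite G"
  unfolding G_def Gi_def by auto

end



context cspctx begin

lemma reduce:
  "Poly_Mapping.keys mm \<subseteq> V \<Longrightarrow> \<exists>c u. std u \<and> (std mm \<longrightarrow> u = mm \<and> c = 1) \<and> (u = mm \<or> lex_less u mm)
      \<and> Poly_Mapping.single mm 1 - Poly_Mapping.single u c \<in> J"
proof (induction "(wsum xw mm, wsum (\<lambda>_. 1) mm)" arbitrary: mm rule: less_induct)
  case less
  note IH = less.hyps and mmV = less.prems
  show ?case
  proof (cases "std mm")
    case True
    have "Poly_Mapping.single mm 1 - Poly_Mapping.single mm 1 \<in> J"
      using ideal_zero[OF J_ideal] by simp
    then show ?thesis using True by blast
  next
    case nstd: False
    show ?thesis
    proof (cases "\<exists>i t. X i t \<in> Poly_Mapping.keys mm")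
      case True
      then obtain i t where xk: "X i t \<in> Poly_Mapping.keys mm" by blast
      let ?x = "X i t"
      have it: "i \<in> {1..s}" "t \<in> {1..k i}" using xk mmV by (auto simp: X_in_V)
      define mm' where "mm' = mm - Poly_Mapping.single ?x 1"
      have le1: "1 \<le> Poly_Mapping.lookup mm ?x" using xk by (simp add: in_keys_iff)
      have mm_eq: "mm = mm' + Poly_Mapping.single ?x 1"
        unfolding mm'_def by (rule split_mono[OF le1])
      define mm2 where "mm2 = mm' + Pm i t"
      have keys_mm': "Poly_Mapping.keys mm' \<subseteq> V"
        using mmV mm_eq keys_add_nat[of mm' "Poly_Mapping.single ?x 1"] by auto
      have keys_mm2: "Poly_Mapping.keys mm2 \<subseteq> V"
        unfolding mm2_def keys_add_nat using keys_mm' keys_Pm_V[OF it(1)] by blast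
      have xwPm: "wsum xw (Pm i t) = 0"
      proof (rule wsum_zero)
        fix v assume "v \<in> Poly_Mapping.keys (Pm i t)"
        then show "xw v = 0" using keys_Pm[of i t] by auto
      qed
      have a1: "wsum xw mm = wsum xw mm' + 1"
        by (subst mm_eq) (simp add: wsum_add wsum_single)
      have a2: "wsum xw mm2 = wsum xw mm'"
        unfolding mm2_def by (simp add: wsum_add xwPm)
      have "wsum xw mm2 < wsum xw mm" using a1 a2 by simp
      then have lt: "((wsum xw mm2, wsum (\<lambda>_. 1) mm2), (wsum xw mm, wsum (\<lambda>_. 1) mm)) \<in> {(a, b). a < b}"
        by simp
      obtain c u where cu: "std u" "u = mm2 \<or> lex_less u mm2"
        "Poly_Mapping.single mm2 1 - Poly_Mapping.single u c \<in> J"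
        using IH[of mm2] keys_mm2 lt by auto
      have lex2: "lex_less mm2 mm"
        unfolding lex_less_def
      proof (intro exI[of _ ?x] conjI allI impI)
        show "Poly_Mapping.lookup mm2 ?x < Poly_Mapping.lookup mm ?x"
          unfolding mm2_def using le1 by (simp add: mm'_def lookup_add lookup_Pm_X lookup_minus_nat)
      next
        fix w assume w: "rank w < rank ?x"
        then obtain a b where wab: "w = X a b" by (cases w) auto
        then have "w \<noteq> ?x" using w by auto
        then show "Poly_Mapping.lookup mm2 w = Poly_Mapping.lookup mm w"
          unfolding mm2_def mm'_def using wab by (auto simp: lookup_add lookup_Pm_X lookup_minus_nat lookup_single when_def)
      qed
      have lexu: "lex_less u mm" using cu(2) lex2 lex_trans by blast
      define c0 where "c0 = \<omega> i ^ \<alpha> i t"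
      have eq: "Poly_Mapping.single mm 1 - Poly_Mapping.single u (c0 * c) =
          Poly_Mapping.single mm' 1 * constr_poly r \<omega> \<alpha> \<beta> i t
          + Const c0 * (Poly_Mapping.single mm2 1 - Poly_Mapping.single u c)"
      proof -
        have e1: "Poly_Mapping.single mm' 1 * constr_poly r \<omega> \<alpha> \<beta> i t = Poly_Mapping.single mm 1 - Poly_Mapping.single mm2 c0"
          by (simp only: constr_eq Var_def right_diff_distrib mult_single mult_1 mm2_def c0_def mm_eq[symmetric])
        have e2: "Const c0 * (Poly_Mapping.single mm2 1 - Poly_Mapping.single u c) = Poly_Mapping.single mm2 c0 - Poly_Mapping.single u (c0 * c)"
          by (simp only: right_diff_distrib Const_mult_single mult_1_right)
        show ?thesis unfolding e1 e2 by simp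
      qed
      have "Poly_Mapping.single mm' 1 * constr_poly r \<omega> \<alpha> \<beta> i t \<in> J"
        by (rule ideal_mult[OF J_ideal polyring_single[OF keys_mm']])
           (rule subsetD[OF G_sub_J constr_in_G[OF it]])
      moreover have "Const c0 * (Poly_Mapping.single mm2 1 - Poly_Mapping.single u c) \<in> J"
        by (rule ideal_mult[OF J_ideal polyring_Const cu(3)])
      ultimately have "Poly_Mapping.single mm 1 - Poly_Mapping.single u (c0 * c) \<in> J"
        unfolding eq by (rule ideal_add[OF J_ideal])
      then show ?thesis using cu(1) lexu nstd by blast
    next
      case False
      have keysYV: "Poly_Mapping.keys mm \<subseteq> YV"
      proof
        fix v assume v: "v \<in> Poly_Mapping.keys mm"
        then show "v \<in> YV"
        proof (cases v)
          case (X i t)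
          then show ?thesis using False v by blast
        next
          case (Y i j)
          then show ?thesis using v mmV by (auto simp: Y_in_V Y_in_YV)
        qed
      qed
      then obtain y where yk: "y \<in> Poly_Mapping.keys mm" and yq: "q (sort_of y) \<le> Poly_Mapping.lookup mm y"
        using nstd unfolding std_def by (meson not_less)
      obtain i j where yij: "y = Y i j" and ij: "i \<in> {1..s}" "j \<in> {1..r i}"
        using yk keysYV unfolding YV_def by blast
      have qi: "q i \<le> Poly_Mapping.lookup mm y" using yq yij by simp
      have qpos': "0 < q i" using qpos[OF ij(1)] .
      define mm' where "mm' = mm - Poly_Mapping.single y (q i)"
      have mm_eq: "mm = mm' + Poly_Mapping.single y (q i)"
        unfolding mm'_def by (rule split_mono[OF qi])
      have keys_mm': "Poly_Mapping.keys mm' \<subseteq> V"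
        using mmV mm_eq keys_add_nat[of mm' "Poly_Mapping.single y (q i)"] by auto
      have w1: "wsum xw mm = wsum xw mm'"
        by (subst mm_eq) (simp add: wsum_add wsum_single yij)
      have w2: "wsum (\<lambda>_. 1) mm = wsum (\<lambda>_. 1) mm' + q i"
        by (subst mm_eq) (simp add: wsum_add wsum_single)
      have lt: "((wsum xw mm', wsum (\<lambda>_. 1) mm'), (wsum xw mm, wsum (\<lambda>_. 1) mm)) \<in> {(a, b). a < b}"
        using w1 w2 qpos' by simp
      obtain c u where cu: "std u" "u = mm' \<or> lex_less u mm'"
        "Poly_Mapping.single mm' 1 - Poly_Mapping.single u c \<in> J"
        using IH[of mm'] keys_mm' lt by auto
      have lex2: "lex_less mm' mm"
        unfolding lex_less_def
      proof (intro exI[of _ y] conjI allI impI)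
        show "Poly_Mapping.lookup mm' y < Poly_Mapping.lookup mm y"
          unfolding mm'_def using qi qpos' by (simp add: lookup_minus_nat)
      next
        fix w assume w: "rank w < rank y"
        then have "w \<noteq> y" by auto
        then show "Poly_Mapping.lookup mm' w = Poly_Mapping.lookup mm w"
          unfolding mm'_def by (simp add: lookup_minus_nat lookup_single when_def)
      qed
      have lexu: "lex_less u mm" using cu(2) lex2 lex_trans by blast
      have eq: "Poly_Mapping.single mm 1 - Poly_Mapping.single u c =
          Poly_Mapping.single mm' 1 * (Var y ^ q i - 1)
          + (Poly_Mapping.single mm' 1 - Poly_Mapping.single u c)"
      proof -
        have e1: "Poly_Mapping.single mm' 1 * (Var y ^ q i - 1) = Poly_Mapping.single mm 1 - Poly_Mapping.single mm' 1"
          by (simp only: Var_power right_diff_distrib mult_single mult_1 mult_1_right mm_eq[symmetric])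
        show ?thesis unfolding e1 by simp
      qed
      have "Poly_Mapping.single mm' 1 * (Var y ^ q i - 1) \<in> J"
        by (rule ideal_mult[OF J_ideal polyring_single[OF keys_mm']])
           (rule subsetD[OF G_sub_J], unfold yij, rule dom_in_G[OF ij])
      then have "Poly_Mapping.single mm 1 - Poly_Mapping.single u c \<in> J"
        unfolding eq by (rule ideal_add[OF J_ideal _ cu(3)])
      then show ?thesis using cu(1) lexu nstd by blast
    qed
  qed
qed

end



context cspctx begin

lemma R_keys: "f \<in> R \<Longrightarrow> m \<in> Poly_Mapping.keys f \<Longrightarrow> Poly_Mapping.keys m \<subseteq> V"
  unfolding polyring_def by blast

lemma nf:
  assumes fR: "f \<in> R"
  shows "\<exists>g. (\<forall>u\<in>Poly_Mapping.keys g. std u) \<and> f - g \<in> J \<and>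
     (f \<noteq> 0 \<longrightarrow> std (lead_monom f) \<longrightarrow> Poly_Mapping.lookup g (lead_monom f) \<noteq> 0)"
proof -
  let ?P = "\<lambda>m c u. std u \<and> (std m \<longrightarrow> u = m \<and> c = 1) \<and> (u = m \<or> lex_less u m)
      \<and> Poly_Mapping.single m 1 - Poly_Mapping.single u c \<in> J"
  have "\<forall>m\<in>Poly_Mapping.keys f. \<exists>p. ?P m (fst p) (snd p)"
  proof
    fix m assume "m \<in> Poly_Mapping.keys f"
    then obtain c u where "?P m c u" using reduce[OF R_keys[OF fR]] by blast
    then show "\<exists>p. ?P m (fst p) (snd p)" by (intro exI[of _ "(c, u)"]) simp
  qed
  then obtain F where F: "\<forall>m\<in>Poly_Mapping.keys f. ?P m (fst (F m)) (snd (F m))"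
    by (rule bchoice[elim_format]) blast
  define C where "C m = fst (F m)" for m
  define U where "U m = snd (F m)" for m
  have CU: "?P m (C m) (U m)" if "m \<in> Poly_Mapping.keys f" for m
  proof -
    have "?P m (fst (F m)) (snd (F m))" using F that by (rule bspec)
    then show ?thesis unfolding C_def U_def .
  qed
  define g where "g = (\<Sum>m\<in>Poly_Mapping.keys f. Poly_Mapping.single (U m) (Poly_Mapping.lookup f m * C m))"
  have g_std: "\<forall>u\<in>Poly_Mapping.keys g. std u"
  proof
    fix u assume "u \<in> Poly_Mapping.keys g"
    then have "u \<in> (\<Union>m\<in>Poly_Mapping.keys f. Poly_Mapping.keys (Poly_Mapping.single (U m) (Poly_Mapping.lookup f m * C m)))"
    proof -
      have "Poly_Mapping.keys g \<subseteq> (\<Union>m\<in>Poly_Mapping.keys f. Poly_Mapping.keys (Poly_Mapping.single (U m) (Poly_Mapping.lookup f m * C m)))"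
        unfolding g_def by (rule keys_sum)
      then show ?thesis using \<open>u \<in> Poly_Mapping.keys g\<close> by (rule subsetD)
    qed
    then obtain m where "m \<in> Poly_Mapping.keys f" "u = U m"
      by (auto split: if_splits)
    then show "std u" using CU by blast
  qed
  have "f - g = (\<Sum>m\<in>Poly_Mapping.keys f. Poly_Mapping.single m (Poly_Mapping.lookup f m)
        - Poly_Mapping.single (U m) (Poly_Mapping.lookup f m * C m))"
  proof -
    have fe: "(\<Sum>m\<in>Poly_Mapping.keys f. Poly_Mapping.single m (Poly_Mapping.lookup f m)) = f"
      by (rule poly_expand[symmetric])
    show ?thesis unfolding g_def sum_subtractf fe by (rule refl)
  qed
  also have "\<dots> = (\<Sum>m\<in>Poly_Mapping.keys f. Const (Poly_Mapping.lookup f m) *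
        (Poly_Mapping.single m 1 - Poly_Mapping.single (U m) (C m)))"
    by (rule sum.cong) (simp_all only: right_diff_distrib Const_mult_single mult_1_right)
  also have "\<dots> \<in> J"
  proof (rule ideal_sum[OF J_ideal], rule ideal_mult[OF J_ideal polyring_Const])
    fix m assume "m \<in> Poly_Mapping.keys f"
    then show "Poly_Mapping.single m 1 - Poly_Mapping.single (U m) (C m) \<in> J" using CU by blast
  qed
  finally have "f - g \<in> J" .
  moreover have "Poly_Mapping.lookup g (lead_monom f) \<noteq> 0"
    if nz: "f \<noteq> 0" and sM: "std (lead_monom f)"
  proof -
    let ?M = "lead_monom f"
    have Mk: "?M \<in> Poly_Mapping.keys f" and Mmax: "\<forall>m'\<in>Poly_Mapping.keys f. m' \<noteq> ?M \<longrightarrow> lex_less m' ?M"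
      using lead_monom_prop[OF nz] by auto
    have "Poly_Mapping.lookup g ?M = (\<Sum>m\<in>Poly_Mapping.keys f. Poly_Mapping.lookup (Poly_Mapping.single (U m) (Poly_Mapping.lookup f m * C m)) ?M)"
      unfolding g_def by (rule lookup_sum)
    also have "\<dots> = Poly_Mapping.lookup (Poly_Mapping.single (U ?M) (Poly_Mapping.lookup f ?M * C ?M)) ?M
        + (\<Sum>m\<in>Poly_Mapping.keys f - {?M}. Poly_Mapping.lookup (Poly_Mapping.single (U m) (Poly_Mapping.lookup f m * C m)) ?M)"
      by (rule sum.remove[OF finite_keys Mk])
    also have "(\<Sum>m\<in>Poly_Mapping.keys f - {?M}. Poly_Mapping.lookup (Poly_Mapping.single (U m) (Poly_Mapping.lookup f m * C m)) ?M) = 0"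
    proof (rule sum.neutral, rule ballI)
      fix m assume m: "m \<in> Poly_Mapping.keys f - {?M}"
      then have mk: "m \<in> Poly_Mapping.keys f" and mM: "m \<noteq> ?M" by auto
      have lm: "lex_less m ?M" using Mmax mk mM by blast
      have "U m \<noteq> ?M"
      proof (cases "std m")
        case True
        then have "U m = m" using CU[OF mk] by blast
        then show ?thesis using mM by simp
      next
        case False
        have "std (U m)" using CU[OF mk] by blast
        then have "U m \<noteq> m" using False by auto
        then have "lex_less (U m) m" using CU[OF mk] by blast
        then have "lex_less (U m) ?M" using lm lex_trans by blast
        then show ?thesis using lex_irrefl by auto
      qed
      then show "Poly_Mapping.lookup (Poly_Mapping.single (U m) (Poly_Mapping.lookup f m * C m)) ?M = 0"
        by (simp add: lookup_single_not_eq)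
    qed
    finally have l1: "Poly_Mapping.lookup g ?M = Poly_Mapping.lookup (Poly_Mapping.single (U ?M) (Poly_Mapping.lookup f ?M * C ?M)) ?M"
      by simp
    have "U ?M = ?M" "C ?M = 1" using CU[OF Mk] sM by auto
    then have "Poly_Mapping.lookup g ?M = Poly_Mapping.lookup f ?M" using l1 by simp
    then show ?thesis using Mk by (simp add: in_keys_iff)
  qed
  ultimately show ?thesis using g_std by blast
qed

end



lemma root_sum:
  fixes w :: complex
  assumes pr: "primitive_root n w" and n: "0 < n"
  shows "(\<Sum>x\<in>(\<lambda>j. w ^ j) ` {..<n}. x ^ e) = (if n dvd e then of_nat n else 0)"
proof -
  have wn: "w ^ n = 1" using pr unfolding primitive_root_def by blast
  have w0: "w \<noteq> 0" using wn n by (metis power_0_left less_not_refl zero_neq_one)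
  have prim': "\<And>d. 0 < d \<Longrightarrow> d < n \<Longrightarrow> w ^ d \<noteq> 1" using pr unfolding primitive_root_def by blast
  have inj: "inj_on (\<lambda>j. w ^ j) {..<n}"
  proof (rule inj_onI)
    fix a b assume a: "a \<in> {..<n}" and b: "b \<in> {..<n}" and eq: "w ^ a = w ^ b"
    show "a = b"
    proof (rule ccontr)
      assume "a \<noteq> b"
      then consider "a < b" | "b < a" by linarith
      then show False
      proof cases
        case 1
        have "w ^ b = w ^ a * w ^ (b - a)" using 1 by (simp add: power_add[symmetric])
        then have "w ^ (b - a) = 1" using eq w0 by simp
        moreover have "b - a < n" using b by auto
        ultimately show False using prim'[of "b - a"] 1 by simp
      next
        case 2
        have "w ^ a = w ^ b * w ^ (a - b)" using 2 by (simp add: power_add[symmetric])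
        then have "w ^ (a - b) = 1" using eq w0 by simp
        moreover have "a - b < n" using a by auto
        ultimately show False using prim'[of "a - b"] 2 by simp
      qed
    qed
  qed
  have "(\<Sum>x\<in>(\<lambda>j. w ^ j) ` {..<n}. x ^ e) = (\<Sum>j<n. (w ^ j) ^ e)"
    by (rule sum.reindex[OF inj, unfolded comp_def])
  also have "\<dots> = (\<Sum>j<n. (w ^ e) ^ j)"
    by (simp add: power_mult[symmetric] mult.commute)
  also have "\<dots> = (if n dvd e then of_nat n else 0)"
  proof (cases "n dvd e")
    case True
    then obtain c where "e = n * c" by blast
    then have "w ^ e = 1" by (simp add: power_mult wn)
    then show ?thesis using True by simp
  next
    case False
    have "w ^ e = w ^ (e mod n)"
      by (metis div_mult_mod_eq power_add power_mult wn power_one mult_1 mult.commute)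
    moreover have "0 < e mod n" "e mod n < n" using False n by (auto simp: mod_eq_0_iff_dvd[symmetric])
    ultimately have ne1: "w ^ e \<noteq> 1" using prim' by simp
    have "(w ^ e) ^ n = (w ^ n) ^ e" by (simp only: power_mult[symmetric] mult.commute)
    then have "(w ^ e) ^ n = 1" by (simp add: wn)
    then show ?thesis using False ne1 by (simp add: sum_gp_strict)
  qed
  finally show ?thesis .
qed




context cspctx begin

definition "Uset i = (\<lambda>j. \<omega> i ^ j) ` {..<q i}"
definition "PS = PiE YV (\<lambda>v. Uset (sort_of v))"
definition "ext z = (\<lambda>v. case v of
    Y i j \<Rightarrow> (if Y i j \<in> YV then z (Y i j) else 0)
  | X i t \<Rightarrow> (if X i t \<in> V then \<omega> i ^ \<alpha> i t * (\<Prod>j\<in>{1..r i}. z (Y i j) ^ \<beta> i t j) else 0))"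

lemma Uset_pow: "i \<in> {1..s} \<Longrightarrow> w \<in> Uset i \<Longrightarrow> w ^ q i = 1"
proof -
  assume i: "i \<in> {1..s}" and w: "w \<in> Uset i"
  then obtain j where "w = \<omega> i ^ j" unfolding Uset_def by blast
  then have "w ^ q i = (\<omega> i ^ q i) ^ j" by (simp only: power_mult[symmetric] mult.commute)
  also have "\<omega> i ^ q i = 1" using prim[OF i] unfolding primitive_root_def by blast
  finally show ?thesis by simp
qed

lemma finite_Uset: "finite (Uset i)"
  unfolding Uset_def by simp

lemma sort_YV: "v \<in> YV \<Longrightarrow> sort_of v \<in> {1..s}"
  unfolding YV_def by auto

lemma ext_Sol:
  assumes z: "z \<in> PS"
  shows "ext z \<in> Sol s k r q \<omega> \<alpha> \<beta>"
proof -
  have zY: "z (Y i j) ^ q i = 1" if "i \<in> {1..s}" "j \<in> {1..r i}" for i j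
  proof -
    have "Y i j \<in> YV" using that by (simp add: Y_in_YV)
    then have "z (Y i j) \<in> Uset i" using z unfolding PS_def by (auto simp: PiE_iff)
    then show ?thesis using Uset_pow that(1) by blast
  qed
  have out: "ext z v = 0" if "v \<notin> V" for v
    using that YV_sub_V by (cases v) (auto simp: ext_def)
  have dom: "ext z v ^ q (sort_of v) = 1" if "v \<in> V" for v
  proof (cases v)
    case (X i t)
    then have it: "i \<in> {1..s}" "t \<in> {1..k i}" using that by (auto simp: X_in_V)
    have "ext z v ^ q (sort_of v) = (\<omega> i ^ \<alpha> i t * (\<Prod>j\<in>{1..r i}. z (Y i j) ^ \<beta> i t j)) ^ q i"
      using X that by (simp add: ext_def)
    also have "\<dots> = (\<omega> i ^ q i) ^ \<alpha> i t * (\<Prod>j\<in>{1..r i}. (z (Y i j) ^ q i) ^ \<beta> i t j)"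
      by (simp only: power_mult_distrib prod_power_distrib power_mult[symmetric] mult.commute)
    also have "\<dots> = 1"
      using prim[OF it(1)] zY it(1) unfolding primitive_root_def by simp
    finally show ?thesis .
  next
    case (Y i j)
    then have "i \<in> {1..s}" "j \<in> {1..r i}" using that by (auto simp: Y_in_V)
    then show ?thesis using Y zY by (simp add: ext_def Y_in_YV)
  qed
  have con: "ext z (X i t) = \<omega> i ^ \<alpha> i t * (\<Prod>j\<in>{1..r i}. ext z (Y i j) ^ \<beta> i t j)"
    if "i \<in> {1..s}" "t \<in> {1..k i}" for i t
  proof -
    have "(\<Prod>j\<in>{1..r i}. ext z (Y i j) ^ \<beta> i t j) = (\<Prod>j\<in>{1..r i}. z (Y i j) ^ \<beta> i t j)"
      by (rule prod.cong) (use that in \<open>auto simp: ext_def Y_in_YV\<close>)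
    then show ?thesis using that by (simp add: ext_def X_in_V)
  qed
  show ?thesis unfolding Sol_def using out dom con by blast
qed

lemma mono_eval_ext:
  assumes "std u"
  shows "mono_eval (ext z) u = (\<Prod>v\<in>YV. z v ^ Poly_Mapping.lookup u v)"
proof -
  have "mono_eval (ext z) u = (\<Prod>v\<in>YV. ext z v ^ Poly_Mapping.lookup u v)"
    by (rule mono_eval_superset[OF finite_YV]) (use assms in \<open>simp add: std_def\<close>)
  also have "\<dots> = (\<Prod>v\<in>YV. z v ^ Poly_Mapping.lookup u v)"
  proof (rule prod.cong)
    fix v assume v: "v \<in> YV"
    then obtain i j where "v = Y i j" unfolding YV_def by blast
    then show "ext z v ^ Poly_Mapping.lookup u v = z v ^ Poly_Mapping.lookup u v"
      using v by (simp add: ext_def)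
  qed simp
  finally show ?thesis .
qed

lemma std_lt: "std u \<Longrightarrow> v \<in> YV \<Longrightarrow> Poly_Mapping.lookup u v < q (sort_of v)"
  unfolding std_def using qpos sort_YV by (cases "v \<in> Poly_Mapping.keys u") (auto simp: in_keys_iff)

end



lemma dvd_lem:
  fixes a b n :: nat
  assumes "a < n" "b < n"
  shows "n dvd a + (n - b) \<longleftrightarrow> a = b"
proof
  assume d: "n dvd a + (n - b)"
  then obtain c where c: "a + (n - b) = n * c" by blast
  have "0 < a + (n - b)" "a + (n - b) < 2 * n" using assms by auto
  then have "0 < c" "c < 2" using c by (auto simp: mult.commute) 
  then have "c = 1" by simp
  then show "a = b" using c assms by simp
next
  assume "a = b"
  then show "n dvd a + (n - b)" using assms by simp
qed

context cspctx begin

lemma orth: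
  assumes u: "std u" and u': "std u'"
  shows "(\<Sum>z\<in>PS. (\<Prod>v\<in>YV. z v ^ Poly_Mapping.lookup u v) * (\<Prod>v\<in>YV. z v ^ (q (sort_of v) - Poly_Mapping.lookup u' v)))
       = (if u = u' then (\<Prod>v\<in>YV. of_nat (q (sort_of v))) else 0)"
proof -
  define e where "e v = Poly_Mapping.lookup u v + (q (sort_of v) - Poly_Mapping.lookup u' v)" for v
  have "(\<Sum>z\<in>PS. (\<Prod>v\<in>YV. z v ^ Poly_Mapping.lookup u v) * (\<Prod>v\<in>YV. z v ^ (q (sort_of v) - Poly_Mapping.lookup u' v)))
      = (\<Sum>z\<in>PS. \<Prod>v\<in>YV. z v ^ e v)"
    by (rule sum.cong) (simp_all only: e_def power_add prod.distrib)
  also have "\<dots> = (\<Prod>v\<in>YV. \<Sum>w\<in>Uset (sort_of v). w ^ e v)"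
    unfolding PS_def by (rule prod_sum_PiE[symmetric]) (simp_all add: finite_YV finite_Uset)
  also have "\<dots> = (\<Prod>v\<in>YV. if u = u' then of_nat (q (sort_of v)) else (if Poly_Mapping.lookup u v = Poly_Mapping.lookup u' v then of_nat (q (sort_of v)) else 0))"
  proof (rule prod.cong)
    fix v assume v: "v \<in> YV"
    have sv: "sort_of v \<in> {1..s}" using sort_YV[OF v] .
    have "(\<Sum>w\<in>Uset (sort_of v). w ^ e v) = (if q (sort_of v) dvd e v then of_nat (q (sort_of v)) else 0)"
      unfolding Uset_def by (rule root_sum[OF prim[OF sv] qpos[OF sv]])
    also have "q (sort_of v) dvd e v \<longleftrightarrow> Poly_Mapping.lookup u v = Poly_Mapping.lookup u' v"
      unfolding e_def by (rule dvd_lem[OF std_lt[OF u v] std_lt[OF u' v]])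
    finally show "(\<Sum>w\<in>Uset (sort_of v). w ^ e v) = (if u = u' then of_nat (q (sort_of v)) else (if Poly_Mapping.lookup u v = Poly_Mapping.lookup u' v then of_nat (q (sort_of v)) else 0))"
      by simp
  qed simp
  also have "\<dots> = (if u = u' then (\<Prod>v\<in>YV. of_nat (q (sort_of v))) else 0)"
  proof (cases "u = u'")
    case True
    show ?thesis unfolding if_P[OF True] by (rule refl)
  next
    case False
    have "\<exists>v. Poly_Mapping.lookup u v \<noteq> Poly_Mapping.lookup u' v"
    proof (rule ccontr)
      assume "\<not> (\<exists>v. Poly_Mapping.lookup u v \<noteq> Poly_Mapping.lookup u' v)"
      then have "u = u'" by (intro poly_mapping_eqI) simp
      then show False using False by simp
    qed
    then obtain v where dv: "Poly_Mapping.lookup u v \<noteq> Poly_Mapping.lookup u' v" by blast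
    then have "v \<in> Poly_Mapping.keys u \<union> Poly_Mapping.keys u'" by (auto simp: in_keys_iff)
    then have vY: "v \<in> YV" using u u' unfolding std_def by blast
    have "(\<Prod>v\<in>YV. if u = u' then of_nat (q (sort_of v)) else (if Poly_Mapping.lookup u v = Poly_Mapping.lookup u' v then of_nat (q (sort_of v)) else 0)) = (0::complex)"
      using False dv vY by (subst prod_zero_iff[OF finite_YV]) auto
    then show ?thesis using False by simp
  qed
  finally show ?thesis .
qed

lemma std_zero:
  assumes gs: "\<forall>u\<in>Poly_Mapping.keys g. std u"
    and van: "\<forall>a\<in>Sol s k r q \<omega> \<alpha> \<beta>. eval a g = 0"
  shows "g = 0"
proof (rule ccontr)
  assume "g \<noteq> 0"
  then obtain u' where u'k: "u' \<in> Poly_Mapping.keys g" by (meson keys_eq_empty ex_in_conv)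
  have su': "std u'" using gs u'k by blast
  define W where "W z = (\<Prod>v\<in>YV. z v ^ (q (sort_of v) - Poly_Mapping.lookup u' v))" for z :: "var \<Rightarrow> complex"
  define M where "M u z = (\<Prod>v\<in>YV. z v ^ Poly_Mapping.lookup u v)" for u :: mono and z :: "var \<Rightarrow> complex"
  define Q where "Q = (\<Prod>v\<in>YV. (of_nat (q (sort_of v)) :: complex))"
  have "0 = (\<Sum>z\<in>PS. eval (ext z) g * W z)"
    using van ext_Sol by simp
  also have "\<dots> = (\<Sum>z\<in>PS. \<Sum>u\<in>Poly_Mapping.keys g. Poly_Mapping.lookup g u * (M u z * W z))"
  proof (rule sum.cong)
    fix z assume "z \<in> PS"
    have "eval (ext z) g = (\<Sum>u\<in>Poly_Mapping.keys g. Poly_Mapping.lookup g u * M u z)"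
      unfolding eval_def M_def
      by (rule sum.cong) (use gs mono_eval_ext in auto)
    then show "eval (ext z) g * W z = (\<Sum>u\<in>Poly_Mapping.keys g. Poly_Mapping.lookup g u * (M u z * W z))"
      by (simp add: sum_distrib_right mult.assoc)
  qed simp
  also have "\<dots> = (\<Sum>u\<in>Poly_Mapping.keys g. Poly_Mapping.lookup g u * (\<Sum>z\<in>PS. M u z * W z))"
    by (simp only: sum.swap[of _ PS] sum_distrib_left)
  also have "\<dots> = (\<Sum>u\<in>Poly_Mapping.keys g. Poly_Mapping.lookup g u * (if u = u' then Q else 0))"
  proof (rule sum.cong)
    fix u assume "u \<in> Poly_Mapping.keys g"
    then have "std u" using gs by blast
    then show "Poly_Mapping.lookup g u * (\<Sum>z\<in>PS. M u z * W z) = Poly_Mapping.lookup g u * (if u = u' then Q else 0)"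
      unfolding M_def W_def Q_def using orth[OF _ su'] by simp
  qed simp
  also have "\<dots> = (\<Sum>u\<in>Poly_Mapping.keys g. if u = u' then Poly_Mapping.lookup g u * Q else 0)"
    by (rule sum.cong) auto
  also have "\<dots> = Poly_Mapping.lookup g u' * Q"
    using u'k by (simp add: sum.delta)
  finally have "Poly_Mapping.lookup g u' * Q = 0" by simp
  moreover have "Q \<noteq> 0"
    unfolding Q_def using qpos sort_YV by (subst prod_zero_iff[OF finite_YV]) fastforce
  ultimately have "Poly_Mapping.lookup g u' = 0" by simp
  then show False using u'k by (simp add: in_keys_iff)
qed

end



lemma LT_eq: "lead_monom f = M \<Longrightarrow> LT f = Poly_Mapping.single M (Poly_Mapping.lookup f M)"
  by (simp add: LT_def)

context cspctx begin

lemma LT_constr: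
  assumes it: "i \<in> {1..s}" "t \<in> {1..k i}"
  shows "LT (constr_poly r \<omega> \<alpha> \<beta> i t) = Var (X i t)"
proof -
  let ?x = "X i t"
  let ?M = "Poly_Mapping.single ?x (1::nat)"
  let ?P = "Pm i t"
  define c0 where "c0 = \<omega> i ^ \<alpha> i t"
  have f: "constr_poly r \<omega> \<alpha> \<beta> i t = Poly_Mapping.single ?M 1 - Poly_Mapping.single ?P c0"
    unfolding constr_eq Var_def c0_def ..
  have PM: "?P \<noteq> ?M"
  proof
    assume "?P = ?M"
    then have "Poly_Mapping.lookup ?P ?x = Poly_Mapping.lookup ?M ?x" by simp
    then show False by (simp add: lookup_Pm_X)
  qed
  have lkM: "Poly_Mapping.lookup (constr_poly r \<omega> \<alpha> \<beta> i t) ?M = 1"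
    unfolding f using PM by (simp add: lookup_minus lookup_single_not_eq)
  have Mk: "?M \<in> Poly_Mapping.keys (constr_poly r \<omega> \<alpha> \<beta> i t)"
    using lkM by (simp add: in_keys_iff)
  have keys: "Poly_Mapping.keys (constr_poly r \<omega> \<alpha> \<beta> i t) \<subseteq> {?M, ?P}"
  proof -
    have "Poly_Mapping.keys (Poly_Mapping.single ?P c0) \<subseteq> {?P}" by simp
    moreover have "Poly_Mapping.keys (Poly_Mapping.single ?M (1::complex)) \<subseteq> {?M}" by simp
    ultimately show ?thesis
      unfolding f using keys_diff[of "Poly_Mapping.single ?M 1" "Poly_Mapping.single ?P c0"] by blast
  qed
  have lexP: "lex_less ?P ?M"
    unfolding lex_less_def
  proof (intro exI[of _ ?x] conjI allI impI)
    show "Poly_Mapping.lookup ?P ?x < Poly_Mapping.lookup ?M ?x" by (simp add: lookup_Pm_X)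
  next
    fix w assume w: "rank w < rank ?x"
    then obtain a b where wab: "w = X a b" by (cases w) auto
    then have "w \<noteq> ?x" using w by auto
    then show "Poly_Mapping.lookup ?P w = Poly_Mapping.lookup ?M w"
      using wab by (auto simp: lookup_Pm_X lookup_single when_def)
  qed
  have "lead_monom (constr_poly r \<omega> \<alpha> \<beta> i t) = ?M"
  proof (rule lead_monom_eq[OF Mk], rule ballI, rule impI)
    fix m' assume "m' \<in> Poly_Mapping.keys (constr_poly r \<omega> \<alpha> \<beta> i t)" "m' \<noteq> ?M"
    then have "m' = ?P" using keys by blast
    then show "lex_less m' ?M" using lexP by simp
  qed
  then show ?thesis using lkM by (simp add: LT_eq Var_def)
qed

lemma LT_dom:
  assumes ij: "i \<in> {1..s}" "j \<in> {1..r i}"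
  shows "LT (Var (Y i j) ^ q i - 1) = Poly_Mapping.single (Poly_Mapping.single (Y i j) (q i)) 1"
proof -
  let ?y = "Y i j"
  let ?M = "Poly_Mapping.single ?y (q i)"
  have qp: "0 < q i" using qpos[OF ij(1)] .
  have f: "Var ?y ^ q i - 1 = Poly_Mapping.single ?M 1 - Poly_Mapping.single 0 1"
    by (simp add: Var_power)
  have M0: "?M \<noteq> 0"
  proof
    assume "?M = 0"
    then have "Poly_Mapping.lookup ?M ?y = 0" by simp
    then show False using qp by simp
  qed
  have lkM: "Poly_Mapping.lookup (Var ?y ^ q i - 1) ?M = 1"
    unfolding f using M0 by (simp only: lookup_minus lookup_single_eq lookup_single_not_eq[OF M0[symmetric]]) simp
  have Mk: "?M \<in> Poly_Mapping.keys (Var ?y ^ q i - 1)"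
    using lkM by (simp add: in_keys_iff)
  have keys: "Poly_Mapping.keys (Var ?y ^ q i - 1) \<subseteq> {?M, 0}"
  proof -
    have "Poly_Mapping.keys (Poly_Mapping.single (0::mono) (1::complex)) \<subseteq> {0}" by simp
    moreover have "Poly_Mapping.keys (Poly_Mapping.single ?M (1::complex)) \<subseteq> {?M}" by simp
    ultimately show ?thesis
      unfolding f using keys_diff[of "Poly_Mapping.single ?M 1" "Poly_Mapping.single 0 (1::complex)"] by blast
  qed
  have lex0: "lex_less 0 ?M"
    unfolding lex_less_def
  proof (intro exI[of _ ?y] conjI allI impI)
    show "Poly_Mapping.lookup 0 ?y < Poly_Mapping.lookup ?M ?y" using qp by simp
  next
    fix w assume w: "rank w < rank ?y"
    then have "w \<noteq> ?y" by auto
    then show "Poly_Mapping.lookup 0 w = Poly_Mapping.lookup ?M w"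
      by (simp add: lookup_single when_def)
  qed
  have "lead_monom (Var ?y ^ q i - 1) = ?M"
  proof (rule lead_monom_eq[OF Mk], rule ballI, rule impI)
    fix m' assume "m' \<in> Poly_Mapping.keys (Var ?y ^ q i - 1)" "m' \<noteq> ?M"
    then have "m' = 0" using keys by blast
    then show "lex_less m' ?M" using lex0 by simp
  qed
  then show ?thesis using lkM by (simp add: LT_eq)
qed

lemma LT_G_sub_R: "LT ` G \<subseteq> R"
proof
  fix h assume "h \<in> LT ` G"
  then obtain g where g: "g \<in> G" "h = LT g" by blast
  then obtain i where i: "i \<in> {1..s}" "g \<in> Gi k r q \<omega> \<alpha> \<beta> i" unfolding G_def by blast
  then consider (c) t where "t \<in> {1..k i}" "g = constr_poly r \<omega> \<alpha> \<beta> i t"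
    | (d) j where "j \<in> {1..r i}" "g = Var (Y i j) ^ q i - 1"
    unfolding Gi_def by blast
  then show "h \<in> R"
  proof cases
    case c
    then show ?thesis using g(2) i(1) LT_constr polyring_Var[of "X i t" V] by (simp add: X_in_V)
  next
    case d
    then have "h = Poly_Mapping.single (Poly_Mapping.single (Y i j) (q i)) 1" using g(2) i(1) LT_dom by simp
    moreover have "Poly_Mapping.keys (Poly_Mapping.single (Y i j) (q i)) \<subseteq> V"
      using d(1) i(1) by (auto simp: Y_in_V split: if_splits)
    ultimately show ?thesis using polyring_single by blast
  qed
qed

end



context cspctx begin

definition "gens = {Var v ^ q (sort_of v) - 1 | v. v \<in> V}
      \<union> {constr_poly r \<omega> \<alpha> \<beta> i t | i t. i \<in> {1..s} \<and> t \<in> {1..k i}}"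

lemma I_def': "instance_ideal s k r q \<omega> \<alpha> \<beta> = ideal_gen R gens"
  unfolding instance_ideal_def gens_def ..

lemma gens_sub_R: "gens \<subseteq> R"
  unfolding gens_def using dom_in_R constr_in_R by blast

lemma gens_vanish: "gens \<subseteq> vanishing_ideal R (Sol s k r q \<omega> \<alpha> \<beta>)"
proof
  fix g assume g: "g \<in> gens"
  then have gR: "g \<in> R" using gens_sub_R by blast
  have "eval a g = 0" if a: "a \<in> Sol s k r q \<omega> \<alpha> \<beta>" for a
  proof -
    from g consider (d) v where "v \<in> V" "g = Var v ^ q (sort_of v) - 1"
      | (c) i t where "i \<in> {1..s}" "t \<in> {1..k i}" "g = constr_poly r \<omega> \<alpha> \<beta> i t"
      unfolding gens_def by blast
    then show ?thesis
    proof cases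
      case d
      then have "a v ^ q (sort_of v) = 1" using a unfolding Sol_def by blast
      then show ?thesis using d by (simp add: eval_diff eval_power)
    next
      case c
      then have "a (X i t) = \<omega> i ^ \<alpha> i t * (\<Prod>j\<in>{1..r i}. a (Y i j) ^ \<beta> i t j)"
        using a unfolding Sol_def by blast
      then show ?thesis using c
        by (simp add: constr_poly_def eval_diff eval_mult eval_prod eval_power)
    qed
  qed
  then show "g \<in> vanishing_ideal R (Sol s k r q \<omega> \<alpha> \<beta>)"
    unfolding vanishing_ideal_def using gR by blast
qed

lemma G_sub_gens: "G \<subseteq> gens"
proof
  fix g assume "g \<in> G"
  then obtain i where i: "i \<in> {1..s}" "g \<in> Gi k r q \<omega> \<alpha> \<beta> i" unfolding G_def by blast
  then consider (c) t where "t \<in> {1..k i}" "g = constr_poly r \<omega> \<alpha> \<beta> i t"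
    | (d) j where "j \<in> {1..r i}" "g = Var (Y i j) ^ q i - 1"
    unfolding Gi_def by blast
  then show "g \<in> gens"
  proof cases
    case c
    then show ?thesis using i(1) unfolding gens_def by blast
  next
    case d
    then have "Y i j \<in> V" "g = Var (Y i j) ^ q (sort_of (Y i j)) - 1" using i(1) by (simp_all add: Y_in_V)
    then show ?thesis unfolding gens_def by blast
  qed
qed

lemma I_sub_Van: "instance_ideal s k r q \<omega> \<alpha> \<beta> \<subseteq> vanishing_ideal R (Sol s k r q \<omega> \<alpha> \<beta>)"
  unfolding I_def' by (rule ideal_gen_least[OF vanishing_ideal_ideal gens_vanish])

lemma J_sub_I: "J \<subseteq> instance_ideal s k r q \<omega> \<alpha> \<beta>"
  unfolding I_def' J_def
  by (rule ideal_gen_least[OF ideal_gen_ideal[OF gens_sub_R]])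
     (rule order.trans[OF G_sub_gens ideal_gen_sub])

lemma J_sub_Van: "J \<subseteq> vanishing_ideal R (Sol s k r q \<omega> \<alpha> \<beta>)"
  using J_sub_I I_sub_Van by blast

lemma Van_sub_J: "vanishing_ideal R (Sol s k r q \<omega> \<alpha> \<beta>) \<subseteq> J"
proof
  fix f assume f: "f \<in> vanishing_ideal R (Sol s k r q \<omega> \<alpha> \<beta>)"
  then have fR: "f \<in> R" unfolding vanishing_ideal_def by blast
  obtain g where g: "\<forall>u\<in>Poly_Mapping.keys g. std u" "f - g \<in> J" using nf[OF fR] by blast
  have "f - g \<in> vanishing_ideal R (Sol s k r q \<omega> \<alpha> \<beta>)" using g(2) J_sub_Van by blast
  then have "\<forall>a\<in>Sol s k r q \<omega> \<alpha> \<beta>. eval a g = 0"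
    using f unfolding vanishing_ideal_def by (auto simp: eval_diff)
  then have "g = 0" using std_zero g(1) by blast
  then show "f \<in> J" using g(2) by simp
qed

lemma I_eq_Van: "instance_ideal s k r q \<omega> \<alpha> \<beta> = vanishing_ideal R (Sol s k r q \<omega> \<alpha> \<beta>)"
  using I_sub_Van Van_sub_J J_sub_I by blast

lemma I_eq_J: "instance_ideal s k r q \<omega> \<alpha> \<beta> = J"
  using I_sub_Van Van_sub_J J_sub_I by blast

lemma lead_nonstd:
  assumes fI: "f \<in> instance_ideal s k r q \<omega> \<alpha> \<beta>" and nz: "f \<noteq> 0"
  shows "\<not> std (lead_monom f)"
proof
  assume sM: "std (lead_monom f)"
  have fR: "f \<in> R" using fI I_eq_Van unfolding vanishing_ideal_def by blast
  obtain g where g: "\<forall>u\<in>Poly_Mapping.keys g. std u" "f - g \<in> J"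
    "Poly_Mapping.lookup g (lead_monom f) \<noteq> 0"
    using nf[OF fR] nz sM by blast
  have "f \<in> J" using fI I_eq_J by simp
  then have "f - (f - g) \<in> J" using g(2) ideal_diff[OF J_ideal] by blast
  then have "g \<in> J" by simp
  then have "g \<in> vanishing_ideal R (Sol s k r q \<omega> \<alpha> \<beta>)" using J_sub_Van by (rule rev_subsetD)
  then have "\<forall>a\<in>Sol s k r q \<omega> \<alpha> \<beta>. eval a g = 0" unfolding vanishing_ideal_def by blast
  then have "g = 0" using std_zero g(1) by blast
  then show False using g(3) by simp
qed

lemma LT_in:
  assumes fI: "f \<in> instance_ideal s k r q \<omega> \<alpha> \<beta>"
  shows "LT f \<in> ideal_gen R (LT ` G)"
proof (cases "f = 0")
  case True
  have "LT f = 0" using True by (simp add: LT_def)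
  then show ?thesis using ideal_zero[OF ideal_gen_ideal[OF LT_G_sub_R]] by simp
next
  case nz: False
  let ?M = "lead_monom f"
  define c where "c = Poly_Mapping.lookup f ?M"
  let ?L = "ideal_gen R (LT ` G)"
  have Lid: "is_ideal R ?L" by (rule ideal_gen_ideal[OF LT_G_sub_R])
  have fR: "f \<in> R" using fI I_eq_Van unfolding vanishing_ideal_def by blast
  have Mk: "?M \<in> Poly_Mapping.keys f" using lead_monom_prop[OF nz] by blast
  have MV: "Poly_Mapping.keys ?M \<subseteq> V" using R_keys[OF fR Mk] .
  have ns: "\<not> std ?M" using lead_nonstd[OF fI nz] .
  have LTf: "LT f = Poly_Mapping.single ?M c" by (simp add: LT_def c_def)
  show ?thesis
  proof (cases "\<exists>i t. X i t \<in> Poly_Mapping.keys ?M")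
    case True
    then obtain i t where xk: "X i t \<in> Poly_Mapping.keys ?M" by blast
    let ?x = "X i t"
    have it: "i \<in> {1..s}" "t \<in> {1..k i}" using xk MV by (auto simp: X_in_V)
    define M' where "M' = ?M - Poly_Mapping.single ?x 1"
    have le1: "1 \<le> Poly_Mapping.lookup ?M ?x" using xk by (simp add: in_keys_iff)
    have M_eq: "?M = M' + Poly_Mapping.single ?x 1"
      unfolding M'_def by (rule split_mono[OF le1])
    have keys_M': "Poly_Mapping.keys M' \<subseteq> V"
      using MV M_eq keys_add_nat[of M' "Poly_Mapping.single ?x 1"] by auto
    have "LT f = Poly_Mapping.single M' c * Var ?x"
      unfolding LTf Var_def mult_single mult_1_right using M_eq by simp
    moreover have "Var ?x \<in> ?L"
    proof -
      have "Var ?x = LT (constr_poly r \<omega> \<alpha> \<beta> i t)" using LT_constr[OF it] by simp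
      then have "Var ?x \<in> LT ` G" using constr_in_G[OF it] by blast
      then show ?thesis using ideal_gen_sub by blast
    qed
    ultimately show ?thesis using ideal_mult[OF Lid polyring_single[OF keys_M']] by simp
  next
    case False
    have keysYV: "Poly_Mapping.keys ?M \<subseteq> YV"
    proof
      fix v assume v: "v \<in> Poly_Mapping.keys ?M"
      then show "v \<in> YV"
      proof (cases v)
        case (X i t)
        then show ?thesis using False v by blast
      next
        case (Y i j)
        then show ?thesis using v MV by (auto simp: Y_in_V Y_in_YV)
      qed
    qed
    then obtain y where yk: "y \<in> Poly_Mapping.keys ?M" and yq: "q (sort_of y) \<le> Poly_Mapping.lookup ?M y"
      using ns unfolding std_def by (meson not_less)
    obtain i j where yij: "y = Y i j" and ij: "i \<in> {1..s}" "j \<in> {1..r i}"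
      using yk keysYV unfolding YV_def by blast
    have qi: "q i \<le> Poly_Mapping.lookup ?M y" using yq yij by simp
    define M' where "M' = ?M - Poly_Mapping.single y (q i)"
    have M_eq: "?M = M' + Poly_Mapping.single y (q i)"
      unfolding M'_def by (rule split_mono[OF qi])
    have keys_M': "Poly_Mapping.keys M' \<subseteq> V"
      using MV M_eq keys_add_nat[of M' "Poly_Mapping.single y (q i)"] by auto
    have "LT f = Poly_Mapping.single M' c * Poly_Mapping.single (Poly_Mapping.single y (q i)) 1"
      unfolding LTf mult_single mult_1_right using M_eq by simp
    moreover have "Poly_Mapping.single (Poly_Mapping.single y (q i)) 1 \<in> ?L"
    proof -
      have "Poly_Mapping.single (Poly_Mapping.single y (q i)) 1 = LT (Var (Y i j) ^ q i - 1)"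
        using LT_dom[OF ij] yij by simp
      then have "Poly_Mapping.single (Poly_Mapping.single y (q i)) 1 \<in> LT ` G" using dom_in_G[OF ij] by blast
      then show ?thesis using ideal_gen_sub by blast
    qed
    ultimately show ?thesis using ideal_mult[OF Lid polyring_single[OF keys_M']] by simp
  qed
qed

lemma main:
  "instance_ideal s k r q \<omega> \<alpha> \<beta> = vanishing_ideal R (Sol s k r q \<omega> \<alpha> \<beta>)
   \<and> groebner_basis R G (instance_ideal s k r q \<omega> \<alpha> \<beta>)"
proof (intro conjI)
  show "instance_ideal s k r q \<omega> \<alpha> \<beta> = vanishing_ideal R (Sol s k r q \<omega> \<alpha> \<beta>)" by (rule I_eq_Van)
  have GI: "G \<subseteq> instance_ideal s k r q \<omega> \<alpha> \<beta>" using G_sub_J I_eq_J by simp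
  have "ideal_gen R (LT ` G) \<subseteq> ideal_gen R (LT ` instance_ideal s k r q \<omega> \<alpha> \<beta>)"
    using GI by (intro ideal_gen_mono) blast
  moreover have "ideal_gen R (LT ` instance_ideal s k r q \<omega> \<alpha> \<beta>) \<subseteq> ideal_gen R (LT ` G)"
    by (rule ideal_gen_least[OF ideal_gen_ideal[OF LT_G_sub_R]]) (use LT_in in blast)
  ultimately show "groebner_basis R G (instance_ideal s k r q \<omega> \<alpha> \<beta>)"
    unfolding groebner_basis_def using finite_G GI by blast
qed

end


theorem lemma5p5:
  fixes s :: nat and p m q k r :: "nat \<Rightarrow> nat" and \<omega> :: "nat \<Rightarrow> complex"
    and \<alpha> :: "nat \<Rightarrow> nat \<Rightarrow> nat" and \<beta> :: "nat \<Rightarrow> nat \<Rightarrow> nat \<Rightarrow> nat"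
  assumes "\<forall>i\<in>{1..s}. prime (p i)"
    and "\<forall>i\<in>{1..s}. m i \<ge> 1"
    and "\<forall>i\<in>{1..s}. q i = p i ^ m i"
    and "\<forall>i\<in>{1..s}. primitive_root (q i) (\<omega> i)"
    and "\<forall>i\<in>{1..s}. \<forall>t\<in>{1..k i}. \<alpha> i t < q i"
    and "\<forall>i\<in>{1..s}. \<forall>t\<in>{1..k i}. \<forall>j\<in>{1..r i}. \<beta> i t j < q i"
  shows "instance_ideal s k r q \<omega> \<alpha> \<beta>
           = vanishing_ideal (polyring (Vars s k r)) (Sol s k r q \<omega> \<alpha> \<beta>)
       \<and> groebner_basis (polyring (Vars s k r)) (\<Union>i\<in>{1..s}. Gi k r q \<omega> \<alpha> \<beta> i)
           (instance_ideal s k r q \<omega> \<alpha> \<beta>)"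
proof -
  have q0: "q i > 0" if i: "i \<in> {1..s}" for i
  proof -
    have "prime (p i)" using assms(1) i by blast
    then have "p i > 0" by (simp add: prime_gt_0_nat)
    then show ?thesis using assms(3) i by simp
  qed
  interpret cspctx s q k r \<omega> \<alpha> \<beta>
    by unfold_locales (use q0 assms(4) in auto)
  show ?thesis using main unfolding G_def .
qed

end
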